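(* Let $l\ge2$ and $m_1,\dots,m_l\ge3$ be integers. The join $C_{m_1}*\dots*C_{m_l}$ of cycles is (isomorphic to) a circulant graph if and only if $m_1=\dots=m_l=m$ for some $m\ge3$. In that case $C_m*\dots*C_m$ ($l$ copies) is isomorphic to $C_{lm}(S)$ where $S=\{s\in\{1,\dots,\lfloor lm/2\rfloor\}: s=l \text{ or } l\nmid s\}$ (i.e. $\{1,\dots,\lfloor lm/2\rfloor\}$ with $2l,3l,\dots$ removed); explicitly, the induced subgraphs on $V_i=\{i,l+i,\dots,(m-1)l+i\}$, $0\le i<l$, are $m$-cycles and all edges between distinct $V_i$ are present.
   Context: $C_m$ is the cycle of length $m$. The circulant graph $C_n(S)$ ($S\subseteq\{1,\dots,\lfloor n/2\rfloor\}$) has vertex set $\{0,\dots,n-1\}$ with $\{a,b\}$ an edge iff $\min(|a-b|,n-|a-b|)\in S$. The join $G*H$ of graphs with disjoint vertex sets has all edges of $G$, of $H$, and all pairs $\{x,y\}$ with $x\in V(G)$, $y\in V(H)$. *)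

theory Defs
  imports Main
begin

text \<open>Simple graphs are given by a vertex set V and a symmetric irreflexive
adjacency relation E (only its restriction to V matters).\<close>

definition graph_iso :: "'a set \<Rightarrow> ('a \<Rightarrow> 'a \<Rightarrow> bool) \<Rightarrow> 'b set \<Rightarrow> ('b \<Rightarrow> 'b \<Rightarrow> bool) \<Rightarrow> bool" where
  "graph_iso V E W F \<longleftrightarrow> (\<exists>f. bij_betw f V W \<and> (\<forall>x\<in>V. \<forall>y\<in>V. E x y \<longleftrightarrow> F (f x) (f y)))"

definition cyc_adj :: "nat \<Rightarrow> nat \<Rightarrow> nat \<Rightarrow> bool" where
  "cyc_adj m a b \<longleftrightarrow> a < m \<and> b < m \<and> a \<noteq> b \<and> (b = (a + 1) mod m \<or> a = (b + 1) mod m)"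

definition circ_adj :: "nat \<Rightarrow> nat set \<Rightarrow> nat \<Rightarrow> nat \<Rightarrow> bool" where
  "circ_adj n S a b \<longleftrightarrow> a < n \<and> b < n \<and> a \<noteq> b \<and>
     (let d = (if a \<le> b then b - a else a - b) in min d (n - d) \<in> S)"

text \<open>Join C_{m_1} * ... * C_{m_l} of the cycles listed in ms: vertex (i,j) is vertex j
of the i-th cycle; within a copy the cycle edges, between distinct copies all edges.\<close>
definition join_cyc_V :: "nat list \<Rightarrow> (nat \<times> nat) set" where
  "join_cyc_V ms = {(i, j). i < length ms \<and> j < ms ! i}"

definition join_cyc_adj :: "nat list \<Rightarrow> nat \<times> nat \<Rightarrow> nat \<times> nat \<Rightarrow> bool" where
  "join_cyc_adj ms x y \<longleftrightarrow> x \<in> join_cyc_V ms \<and> y \<in> join_cyc_V ms \<and>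
     (if fst x = fst y then cyc_adj (ms ! fst x) (snd x) (snd y) else True)"

definition join_conn :: "nat \<Rightarrow> nat \<Rightarrow> nat set" where
  "join_conn l m = {s \<in> {1..(l * m) div 2}. s = l \<or> \<not> l dvd s}"

end

theory Submission imports Defs begin

lemma circ_sym: "circ_adj n S a b = circ_adj n S b a"
  unfolding circ_adj_def Let_def by auto

lemma min_half: "(d::nat) \<le> n \<Longrightarrow> min d (n-d) \<le> n div 2"
  by arith

lemma kl_bound: assumes "k<m" "i<(l::nat)" shows "k*l+i < l*m"
proof -
  have "(k+1)*l \<le> m*l" using assms by (intro mult_le_mono1) simp
  then show ?thesis using assms by (simp add: mult.commute)
qed

lemma same_lt:
  assumes "0<l" "3\<le>m" "k<k'" "k'<m" "i<l"
  shows "circ_adj (l*m) (join_conn l m) (k*l+i) (k'*l+i) \<longleftrightarrow> cyc_adj m k k'"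
proof -
  define t where "t = k'-k"
  have t1: "1 \<le> t" "1 \<le> m - t" "t \<le> m" using assms by (auto simp: t_def)
  have d: "k'*l+i - (k*l+i) = t*l" by (simp add: t_def diff_mult_distrib)
  have nd: "l*m - t*l = (m-t)*l" by (simp add: diff_mult_distrib2 mult.commute)
  have kl: "k*l \<le> k'*l" using assms by simp
  have mn: "min (t*l) ((m-t)*l) = min t (m-t) * l"
    using assms by (auto simp: min_def)
  have ab: "k*l+i < l*m" "k'*l+i < l*m" using assms kl_bound by auto
  have ne: "k*l+i \<noteq> k'*l+i" using assms by simp
  have c1: "circ_adj (l*m) (join_conn l m) (k*l+i) (k'*l+i) \<longleftrightarrow> min t (m-t) * l \<in> join_conn l m"
  proof -
    have e: "(if k*l+i \<le> k'*l+i then k'*l+i-(k*l+i) else k*l+i-(k'*l+i)) = t*l"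
      using kl d by simp
    show ?thesis using ab ne unfolding circ_adj_def Let_def e nd mn by simp
  qed
  have c2: "min t (m-t) * l \<in> join_conn l m \<longleftrightarrow> min t (m-t) = 1"
  proof
    assume "min t (m - t) = 1"
    moreover have "l \<le> l*m div 2"
    proof -
      have "l*2 \<le> l*m" using assms by simp
      then show ?thesis by linarith
    qed
    ultimately show "min t (m-t) * l \<in> join_conn l m" using assms by (simp add: join_conn_def)
  next
    assume h: "min t (m-t) * l \<in> join_conn l m"
    show "min t (m-t) = 1"
    proof (rule ccontr)
      assume "min t (m-t) \<noteq> 1"
      then have "min t (m-t) * l \<noteq> l" using assms by simp
      then show False using h by (simp add: join_conn_def)
    qed
  qed
  have c3: "cyc_adj m k k' \<longleftrightarrow> t = 1 \<or> m - t = 1"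
    using assms unfolding cyc_adj_def t_def
    by (cases "Suc k' = m") (auto simp: mod_if)
  show ?thesis using c1 c2 c3 t1 by linarith
qed

lemma same_cls:
  assumes "0<l" "3\<le>m" "k<m" "k'<m" "i<l"
  shows "circ_adj (l*m) (join_conn l m) (k*l+i) (k'*l+i) \<longleftrightarrow> cyc_adj m k k'"
proof -
  consider "k<k'" | "k=k'" | "k'<k" by linarith
  then show ?thesis
  proof cases
    case 1 then show ?thesis using same_lt assms by blast
  next
    case 2 then show ?thesis by (simp add: circ_adj_def cyc_adj_def)
  next
    case 3
    then have "circ_adj (l*m) (join_conn l m) (k'*l+i) (k*l+i) \<longleftrightarrow> cyc_adj m k' k"
      using same_lt assms by blast
    moreover have "cyc_adj m k' k = cyc_adj m k k'" unfolding cyc_adj_def by auto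
    ultimately show ?thesis using circ_sym by metis
  qed
qed

lemma diff_cls_gen:
  assumes "0<l" "a < l*m" "b < l*m" "a mod l \<noteq> b mod l"
  shows "circ_adj (l*m) (join_conn l m) a b"
proof -
  define n where "n = l*m"
  define d where "d = (if a \<le> b then b - a else a - b)"
  have "a \<noteq> b" using assms by auto
  then have dn: "d < n" "0 < d" using assms by (auto simp: d_def n_def)
  have nd: "\<not> l dvd d"
  proof
    assume "l dvd d"
    then have "a mod l = b mod l"
      by (cases "a \<le> b") (auto simp: d_def mod_eq_dvd_iff_nat[symmetric])
    with assms show False by simp
  qed
  have nnd: "\<not> l dvd (n - d)"
  proof
    assume "l dvd (n-d)"
    moreover have "l dvd n" by (simp add: n_def)
    ultimately have "l dvd (n - (n - d))" by (simp add: dvd_diff_nat)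
    then show False using nd dn by simp
  qed
  have "min d (n-d) \<in> join_conn l m"
  proof -
    have "min d (n-d) \<le> n div 2" using dn by (intro min_half) simp
    moreover have "1 \<le> min d (n-d)" using dn by simp
    moreover have "\<not> l dvd min d (n-d)" using nd nnd by (simp add: min_def)
    ultimately show ?thesis by (simp add: join_conn_def n_def)
  qed
  then show ?thesis using assms dn unfolding circ_adj_def Let_def d_def n_def by auto
qed

lemma diff_cls:
  assumes "0<l" "i<l" "i'<l" "i\<noteq>i'" "k<m" "k'<m"
  shows "circ_adj (l*m) (join_conn l m) (k*l+i) (k'*l+i')"
  using assms by (intro diff_cls_gen kl_bound) auto

lemma circ_shift:
  assumes "a<n" "b<n"
  shows "circ_adj n S a b \<longleftrightarrow> circ_adj n S 0 ((b+n-a) mod n)"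
proof (cases "a \<le> b")
  case True
  have e: "(b+n-a) mod n = b - a"
  proof -
    have "b+n-a = (b-a) + n" using True by simp
    then have "(b+n-a) mod n = ((b-a) + n) mod n" by (rule arg_cong)
    also have "\<dots> = b - a" using assms by simp
    finally show ?thesis .
  qed
  have d: "(if a \<le> b then b-a else a-b) = b-a" using True by simp
  have d2: "(if 0 \<le> b-a then b-a-0 else 0-(b-a)) = b-a" by simp
  have lt: "b - a < n" using assms by linarith
  have ne: "a \<noteq> b \<longleftrightarrow> 0 \<noteq> b - a" using True by linarith
  show ?thesis using assms lt ne unfolding circ_adj_def Let_def e d d2 by simp
next
  case False
  then have e: "(b+n-a) mod n = n - (a-b)" using assms by simp
  have d: "(if a \<le> b then b-a else a-b) = a-b" using False by simp
  have d2: "(if 0 \<le> n-(a-b) then n-(a-b)-0 else 0-(n-(a-b))) = n-(a-b)" by simp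
  have m: "min (n-(a-b)) (n-(n-(a-b))) = min (a-b) (n-(a-b))"
  proof -
    have "n-(n-(a-b)) = a-b" using assms False by linarith
    then show ?thesis by (simp add: min.commute)
  qed
  have lt: "n - (a-b) < n" "0 \<noteq> n - (a-b)" "a \<noteq> b" "n + b - a < n" using assms False by linarith+
  show ?thesis using assms lt unfolding circ_adj_def Let_def e d d2 m by simp
qed

lemma circ_deg:
  assumes "a<n"
  shows "card {b\<in>{0..<n}. circ_adj n S a b} = card {b\<in>{0..<n}. circ_adj n S 0 b}"
proof -
  define g where "g b = (b+n-a) mod n" for b
  define h where "h x = (x+a) mod n" for x
  have hg: "h (g b) = b" if "b<n" for b
  proof -
    have "h (g b) = (b+n-a+a) mod n" unfolding h_def g_def by (simp add: mod_add_left_eq)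
    also have "\<dots> = b" using that assms by simp
    finally show ?thesis .
  qed
  have gh: "g (h x) = x" if "x<n" for x
  proof -
    have "g (h x) = ((x+a) mod n + (n-a)) mod n" unfolding h_def g_def using assms
      by (simp add: add.commute add_diff_assoc less_imp_le_nat)
    also have "\<dots> = (x+a+(n-a)) mod n" by (simp add: mod_add_left_eq)
    also have "\<dots> = x" using that assms by simp
    finally show ?thesis .
  qed
  have gn: "g b < n" for b using assms unfolding g_def by simp
  have hn: "h b < n" for b using assms unfolding h_def by simp
  have inj: "inj_on g {b\<in>{0..<n}. circ_adj n S a b}"
    by (rule inj_on_inverseI[where g=h]) (auto intro: hg)
  have img: "g ` {b\<in>{0..<n}. circ_adj n S a b} = {b\<in>{0..<n}. circ_adj n S 0 b}"
  proof
    show "g ` {b\<in>{0..<n}. circ_adj n S a b} \<subseteq> {b\<in>{0..<n}. circ_adj n S 0 b}"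
      using circ_shift[OF assms] gn unfolding g_def by auto
  next
    show "{b\<in>{0..<n}. circ_adj n S 0 b} \<subseteq> g ` {b\<in>{0..<n}. circ_adj n S a b}"
    proof
      fix x assume x: "x \<in> {b\<in>{0..<n}. circ_adj n S 0 b}"
      then have "circ_adj n S a (h x)" using circ_shift[OF assms hn, of S x] gh[of x]
        unfolding g_def by auto
      then show "x \<in> g ` {b\<in>{0..<n}. circ_adj n S a b}" using x gh[of x] hn[of x]
        by (auto intro!: image_eqI[of x g "h x"])
    qed
  qed
  show ?thesis using card_image[OF inj] img by simp
qed

lemma iso_deg:
  assumes "bij_betw f V W" "\<forall>x\<in>V. \<forall>y\<in>V. E x y \<longleftrightarrow> F (f x) (f y)" "x\<in>V"
  shows "card {y\<in>V. E x y} = card {w\<in>W. F (f x) w}"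
proof -
  have "f ` {y\<in>V. E x y} = {w\<in>W. F (f x) w}"
    using assms unfolding bij_betw_def by auto
  moreover have "inj_on f {y\<in>V. E x y}"
    using assms unfolding bij_betw_def by (auto intro: inj_on_subset)
  ultimately show ?thesis using card_image by fastforce
qed

lemma suc_mod: "(x::nat) < m \<Longrightarrow> (x+1) mod m = (if Suc x = m then 0 else Suc x)"
  by (cases "Suc x = m") auto

lemma cyc_nbrs:
  assumes "j<m" "3\<le>m"
  shows "card {j'. cyc_adj m j j'} = 2"
proof -
  let ?s = "if Suc j = m then 0 else Suc j"
  let ?p = "if j = 0 then m-1 else j-1"
  have "cyc_adj m j j' \<longleftrightarrow> j' = ?s \<or> j' = ?p" for j'
  proof
    assume h: "cyc_adj m j j'"
    then have j': "j' < m" "j \<noteq> j'" "j' = (j+1) mod m \<or> j = (j'+1) mod m"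
      unfolding cyc_adj_def by auto
    then have "j' = ?s \<or> j = (if Suc j' = m then 0 else Suc j')"
      using suc_mod[OF assms(1)] suc_mod[OF j'(1)] by simp
    then show "j' = ?s \<or> j' = ?p" using j' assms by (cases "Suc j' = m") auto
  next
    assume h: "j' = ?s \<or> j' = ?p"
    have j': "j' < m" using h assms by (cases "Suc j = m"; cases "j = 0") auto
    have "j \<noteq> j'" using h assms by (cases "Suc j = m"; cases "j = 0") auto
    moreover have "j' = (if Suc j = m then 0 else Suc j) \<or> j = (if Suc j' = m then 0 else Suc j')"
      using h assms by (cases "Suc j = m"; cases "j = 0") auto
    ultimately show "cyc_adj m j j'"
      unfolding cyc_adj_def using suc_mod[OF assms(1)] suc_mod[OF j'] j' assms(1) by simp
  qed
  then have "{j'. cyc_adj m j j'} = {?s, ?p}" by blast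
  moreover have "?s \<noteq> ?p"
    using assms by (cases "Suc j = m"; cases "j = 0") auto
  ultimately show ?thesis by simp
qed

lemma join_fin: "finite (join_cyc_V ms)"
proof -
  have "join_cyc_V ms = Sigma {..<length ms} (\<lambda>i. {..<ms!i})"
    unfolding join_cyc_V_def by auto
  then show ?thesis by simp
qed

lemma join_blk: "i < length ms \<Longrightarrow> {i} \<times> {..<ms!i} \<subseteq> join_cyc_V ms"
  unfolding join_cyc_V_def by auto

lemma join_deg:
  assumes "i < length ms" "j < ms!i" "3 \<le> ms!i"
  shows "card {y\<in>join_cyc_V ms. join_cyc_adj ms (i,j) y} = card (join_cyc_V ms) - ms!i + 2"
proof -
  let ?V = "join_cyc_V ms"
  have eq: "{y\<in>?V. join_cyc_adj ms (i,j) y} = (?V - {i} \<times> {..<ms!i}) \<union> ({i} \<times> {j'. cyc_adj (ms!i) j j'})"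
    using assms unfolding join_cyc_adj_def join_cyc_V_def cyc_adj_def by auto
  have f1: "finite (?V - {i} \<times> {..<ms!i})" using join_fin by simp
  have fN: "finite {j'. cyc_adj (ms!i) j j'}"
    by (rule finite_subset[of _ "{..<ms!i}"]) (auto simp: cyc_adj_def)
  have "card ((?V - {i} \<times> {..<ms!i}) \<union> ({i} \<times> {j'. cyc_adj (ms!i) j j'}))
      = card (?V - {i} \<times> {..<ms!i}) + card ({i} \<times> {j'. cyc_adj (ms!i) j j'})"
    by (rule card_Un_disjoint) (auto simp: f1 fN cyc_adj_def)
  also have "card (?V - {i} \<times> {..<ms!i}) = card ?V - ms!i"
    using card_Diff_subset[OF _ join_blk[OF assms(1)]] by (simp add: card_cartesian_product_singleton)
  also have "card ({i} \<times> {j'. cyc_adj (ms!i) j j'}) = 2"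
    using cyc_nbrs[OF assms(2,3)] by (simp add: card_cartesian_product_singleton)
  finally show ?thesis using eq by simp
qed

lemma part2:
  assumes "0<l" "3\<le>m"
  shows "graph_iso (join_cyc_V (replicate l m)) (join_cyc_adj (replicate l m))
                    {0..<l * m} (circ_adj (l * m) (join_conn l m))
          \<and> (\<forall>i < l. graph_iso {0..<m} (cyc_adj m) {k * l + i | k. k < m} (circ_adj (l * m) (join_conn l m)))
          \<and> (\<forall>i < l. \<forall>i' < l. \<forall>k < m. \<forall>k' < m. i \<noteq> i' \<longrightarrow>
                 circ_adj (l * m) (join_conn l m) (k * l + i) (k' * l + i'))"
proof (intro conjI allI impI)
  let ?V = "join_cyc_V (replicate l m)"
  have V: "?V = {(i,k). i<l \<and> k<m}" unfolding join_cyc_V_def by auto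
  define f where "f x = snd x * l + fst x" for x :: "nat \<times> nat"
  define f' where "f' x = (x mod l, x div l)" for x :: nat
  have bij: "bij_betw f ?V {0..<l*m}"
  proof (rule bij_betw_byWitness[where f'=f'])
    show "\<forall>a\<in>?V. f' (f a) = a" unfolding V f_def f'_def by auto
    show "\<forall>a'\<in>{0..<l*m}. f (f' a') = a'" unfolding f_def f'_def by simp
    show "f ` ?V \<subseteq> {0..<l*m}" unfolding V f_def using kl_bound by auto
    show "f' ` {0..<l*m} \<subseteq> ?V" unfolding V f'_def using assms
      by (auto simp: div_less_iff_less_mult mult.commute)
  qed
  have adj: "\<forall>x\<in>?V. \<forall>y\<in>?V. join_cyc_adj (replicate l m) x y \<longleftrightarrow> circ_adj (l*m) (join_conn l m) (f x) (f y)"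
  proof (intro ballI)
    fix x y assume x: "x \<in> ?V" and y: "y \<in> ?V"
    obtain i k i' k' where xy: "x = (i,k)" "y = (i',k')" by (cases x, cases y) auto
    have b: "i<l" "k<m" "i'<l" "k'<m" using x y xy V by auto
    show "join_cyc_adj (replicate l m) x y \<longleftrightarrow> circ_adj (l*m) (join_conn l m) (f x) (f y)"
    proof (cases "i = i'")
      case True
      then show ?thesis using x y xy b same_cls[OF assms, of k k' i] unfolding join_cyc_adj_def f_def by simp
    next
      case False
      then show ?thesis using x y xy b diff_cls[OF assms(1), of i i' k m k'] unfolding join_cyc_adj_def f_def by simp
    qed
  qed
  show "graph_iso ?V (join_cyc_adj (replicate l m)) {0..<l * m} (circ_adj (l * m) (join_conn l m))"
    unfolding graph_iso_def using bij adj by blast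
next
  fix i assume i: "i<l"
  have bij: "bij_betw (\<lambda>k. k*l+i) {0..<m} {k * l + i | k. k < m}"
    using assms by (intro bij_betw_imageI) (auto simp: inj_on_def)
  show "graph_iso {0..<m} (cyc_adj m) {k * l + i | k. k < m} (circ_adj (l * m) (join_conn l m))"
    unfolding graph_iso_def using bij same_cls[OF assms _ _ i] by auto
next
  fix i i' k k' assume "i<l" "i'<l" "k<m" "k'<m" "i\<noteq>i'"
  then show "circ_adj (l * m) (join_conn l m) (k * l + i) (k' * l + i')" using diff_cls assms by blast
qed

theorem lemma4p1:
  fixes ms :: "nat list"
  assumes "length ms \<ge> 2" and "\<forall>i < length ms. ms ! i \<ge> 3"
  shows "((\<exists>n S. S \<subseteq> {1..n div 2} \<and>
              graph_iso (join_cyc_V ms) (join_cyc_adj ms) {0..<n} (circ_adj n S))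
          \<longleftrightarrow> (\<exists>m \<ge> 3. \<forall>i < length ms. ms ! i = m))
     \<and> (\<forall>m \<ge> 3. let l = length ms; S = join_conn l m in
          graph_iso (join_cyc_V (replicate l m)) (join_cyc_adj (replicate l m))
                    {0..<l * m} (circ_adj (l * m) S)
          \<and> (\<forall>i < l. graph_iso {0..<m} (cyc_adj m) {k * l + i | k. k < m} (circ_adj (l * m) S))
          \<and> (\<forall>i < l. \<forall>i' < l. \<forall>k < m. \<forall>k' < m. i \<noteq> i' \<longrightarrow>
                 circ_adj (l * m) S (k * l + i) (k' * l + i')))"
proof -
  let ?l = "length ms"
  have l0: "0 < ?l" using assms(1) by linarith
  have P2: "\<forall>m \<ge> 3. let l = length ms; S = join_conn l m in
          graph_iso (join_cyc_V (replicate l m)) (join_cyc_adj (replicate l m))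
                    {0..<l * m} (circ_adj (l * m) S)
          \<and> (\<forall>i < l. graph_iso {0..<m} (cyc_adj m) {k * l + i | k. k < m} (circ_adj (l * m) S))
          \<and> (\<forall>i < l. \<forall>i' < l. \<forall>k < m. \<forall>k' < m. i \<noteq> i' \<longrightarrow>
                 circ_adj (l * m) S (k * l + i) (k' * l + i'))"
    using part2[OF l0] unfolding Let_def by blast
  have P1: "(\<exists>n S. S \<subseteq> {1..n div 2} \<and>
              graph_iso (join_cyc_V ms) (join_cyc_adj ms) {0..<n} (circ_adj n S))
          \<longleftrightarrow> (\<exists>m \<ge> 3. \<forall>i < length ms. ms ! i = m)"
  proof
    assume "\<exists>n S. S \<subseteq> {1..n div 2} \<and> graph_iso (join_cyc_V ms) (join_cyc_adj ms) {0..<n} (circ_adj n S)"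
    then obtain n S f where bij: "bij_betw f (join_cyc_V ms) {0..<n}" and
      adj: "\<forall>x\<in>join_cyc_V ms. \<forall>y\<in>join_cyc_V ms. join_cyc_adj ms x y \<longleftrightarrow> circ_adj n S (f x) (f y)"
      unfolding graph_iso_def by blast
    let ?V = "join_cyc_V ms"
    have key: "card ?V - ms!i + 2 = card {b\<in>{0..<n}. circ_adj n S 0 b}" if i: "i < ?l" for i
    proof -
      have m3: "3 \<le> ms!i" using assms i by simp
      have xV: "(i,0) \<in> ?V" using i m3 unfolding join_cyc_V_def by simp
      have "card ?V - ms!i + 2 = card {y\<in>?V. join_cyc_adj ms (i,0) y}"
        using join_deg[OF i _ m3] m3 by simp
      also have "\<dots> = card {w\<in>{0..<n}. circ_adj n S (f (i,0)) w}"
        by (rule iso_deg[OF bij adj xV])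
      also have "\<dots> = card {b\<in>{0..<n}. circ_adj n S 0 b}"
        using bij xV by (intro circ_deg) (auto simp: bij_betw_def)
      finally show ?thesis .
    qed
    have le: "ms!i \<le> card ?V" if i: "i < ?l" for i
      using card_mono[OF join_fin join_blk[OF i]] by (simp add: card_cartesian_product_singleton)
    have "\<forall>i < ?l. ms!i = ms!0"
    proof (intro allI impI)
      fix i assume i: "i < ?l"
      have "card ?V - ms!i + 2 = card ?V - ms!0 + 2" using key[OF i] key[OF l0] by simp
      then show "ms!i = ms!0" using le[OF i] le[OF l0] by linarith
    qed
    then show "\<exists>m \<ge> 3. \<forall>i < length ms. ms ! i = m" using assms l0 by blast
  next
    assume "\<exists>m \<ge> 3. \<forall>i < length ms. ms ! i = m"
    then obtain m where m: "3 \<le> m" "\<forall>i < length ms. ms ! i = m" by blast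
    then have r: "ms = replicate ?l m" by (intro nth_equalityI) auto
    have G: "graph_iso (join_cyc_V (replicate ?l m)) (join_cyc_adj (replicate ?l m)) {0..<?l*m} (circ_adj (?l*m) (join_conn ?l m))"
      using part2[OF l0 m(1)] by blast
    have "graph_iso (join_cyc_V ms) (join_cyc_adj ms) {0..<?l*m} (circ_adj (?l*m) (join_conn ?l m))"
      using G by (simp only: r[symmetric])
    moreover have "join_conn ?l m \<subseteq> {1..(?l*m) div 2}" unfolding join_conn_def by auto
    ultimately show "\<exists>n S. S \<subseteq> {1..n div 2} \<and> graph_iso (join_cyc_V ms) (join_cyc_adj ms) {0..<n} (circ_adj n S)"
      by blast
  qed
  show ?thesis using P1 P2 by blast
qed

end
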